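(* Let $S$ be a right simple semigroup with no idempotent, let $a\in S$, and let $A=S^1a$. Then $A\setminus\{a\}=Sa$, the $\mathcal{R}$-classes of the semigroup $A$ are exactly $\{a\}$ and $Sa$, and $\mathrm{H}_{\mathcal{R}}(A)=2$.
   Context: A semigroup is right simple if it has no proper right ideals. $S^1$ denotes $S$ with an identity adjoined. For a semigroup $M$, Green's preorder: $u\leq_{\mathcal{R}} v$ iff $uM^1\subseteq vM^1$; $\mathcal{R}$ is the associated equivalence; the $\mathcal{R}$-height $\mathrm{H}_{\mathcal{R}}(M)$ is the supremum of the cardinalities of chains in the poset of $\mathcal{R}$-classes. Here $\mathcal{R}$ and $\mathrm{H}_{\mathcal{R}}$ are taken in the semigroup $A$ itself. *)

theory Defs
  imports Main "HOL-Library.Extended_Nat"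
begin

text \<open>Semigroups are modelled by the type class semigroup_mult; a semigroup
  "inside" a type is given by a carrier set M closed under multiplication.\<close>

definition right_ideal :: "'a::semigroup_mult set \<Rightarrow> 'a set \<Rightarrow> bool" where
  "right_ideal M I \<longleftrightarrow> I \<subseteq> M \<and> I \<noteq> {} \<and> (\<forall>x\<in>I. \<forall>s\<in>M. x * s \<in> I)"

definition right_simple :: "'a::semigroup_mult set \<Rightarrow> bool" where
  "right_simple M \<longleftrightarrow> (\<forall>I. right_ideal M I \<longrightarrow> I = M)"

text \<open>u M^1 = {u} \<union> u M\<close>
definition right_principal :: "'a::semigroup_mult set \<Rightarrow> 'a \<Rightarrow> 'a set" where
  "right_principal M u = insert u ((\<lambda>m. u * m) ` M)"

definition R_le :: "'a::semigroup_mult set \<Rightarrow> 'a \<Rightarrow> 'a \<Rightarrow> bool" where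
  "R_le M u v \<longleftrightarrow> right_principal M u \<subseteq> right_principal M v"

definition R_equiv :: "'a::semigroup_mult set \<Rightarrow> 'a \<Rightarrow> 'a \<Rightarrow> bool" where
  "R_equiv M u v \<longleftrightarrow> R_le M u v \<and> R_le M v u"

definition R_class :: "'a::semigroup_mult set \<Rightarrow> 'a \<Rightarrow> 'a set" where
  "R_class M u = {v \<in> M. R_equiv M u v}"

definition R_classes :: "'a::semigroup_mult set \<Rightarrow> 'a set set" where
  "R_classes M = R_class M ` M"

text \<open>Induced partial order on R-classes (well defined on representatives).\<close>
definition R_class_le :: "'a::semigroup_mult set \<Rightarrow> 'a set \<Rightarrow> 'a set \<Rightarrow> bool" where
  "R_class_le M X Y \<longleftrightarrow> (\<exists>u\<in>X. \<exists>v\<in>Y. R_le M u v)"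

definition R_chain :: "'a::semigroup_mult set \<Rightarrow> 'a set set \<Rightarrow> bool" where
  "R_chain M C \<longleftrightarrow> C \<subseteq> R_classes M \<and> (\<forall>X\<in>C. \<forall>Y\<in>C. R_class_le M X Y \<or> R_class_le M Y X)"

definition ecard :: "'b set \<Rightarrow> enat" where
  "ecard C = (if finite C then enat (card C) else \<infinity>)"

definition R_height :: "'a::semigroup_mult set \<Rightarrow> enat" where
  "R_height M = Sup (ecard ` {C. R_chain M C})"

end

theory Submission
  imports Defs
begin

lemma rs_div:
  fixes u :: "'a::semigroup_mult"
  assumes "right_simple (UNIV :: 'a set)"
  shows "\<exists>z. y = u * z"
proof -
  have "right_ideal UNIV (range ((*) u))"
    unfolding right_ideal_def by (auto simp: mult.assoc)
  then have "range ((*) u) = UNIV" using assms unfolding right_simple_def by blast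
  then show ?thesis by (metis UNIV_I imageE)
qed

theorem proposition4p7:
  fixes a :: "'a::semigroup_mult"
  assumes "right_simple (UNIV :: 'a set)"
    and "\<forall>e::'a. e * e \<noteq> e"
  defines "A \<equiv> insert a (range (\<lambda>s. s * a))"
  shows "A - {a} = range (\<lambda>s. s * a)
    \<and> R_classes A = {{a}, range (\<lambda>s. s * a)}
    \<and> R_height A = 2"
proof -
  define B where "B = range (\<lambda>s. s * a)"
  have dv: "\<And>u y::'a. \<exists>z. y = u * z" using rs_div[OF assms(1)] by blast
  have aB: "a \<notin> B"
  proof
    assume "a \<in> B"
    then obtain s where s: "a = s * a" unfolding B_def by blast
    obtain t where t: "s = a * t" using dv by blast
    have "(t * a) * (t * a) = t * (a * t * a)" by (simp add: mult.assoc)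
    also have "\<dots> = t * a" using s t by simp
    finally show False using assms(2) by blast
  qed
  have AB: "A = insert a B" unfolding A_def B_def by simp
  have Pa: "right_principal A a = A"
  proof
    show "right_principal A a \<subseteq> A"
      unfolding right_principal_def AB B_def by (auto simp: mult.assoc[symmetric])
    show "A \<subseteq> right_principal A a"
    proof
      fix v assume "v \<in> A"
      then consider "v = a" | y where "v = y * a" unfolding AB B_def by blast
      then show "v \<in> right_principal A a"
      proof cases
        case 1 then show ?thesis unfolding right_principal_def by simp
      next
        case 2
        obtain z where "y = a * z" using dv by blast
        then have "v = a * (z * a)" using 2 by (simp add: mult.assoc)
        then show ?thesis unfolding right_principal_def AB B_def by blast
      qed
    qed
  qed
  have Pb: "right_principal A u = B" if uB: "u \<in> B" for u
  proof -
    obtain x where x: "u = x * a" using uB unfolding B_def by blast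
    show ?thesis
    proof
      show "right_principal A u \<subseteq> B"
        unfolding right_principal_def AB B_def x by (auto simp: mult.assoc[symmetric])
      show "B \<subseteq> right_principal A u"
      proof
        fix v assume "v \<in> B"
        then obtain y where y: "v = y * a" unfolding B_def by blast
        obtain z where "y = u * z" using dv by blast
        then have "v = u * (z * a)" using y by (simp add: mult.assoc)
        moreover have "z * a \<in> A" unfolding AB B_def by blast
        ultimately show "v \<in> right_principal A u" unfolding right_principal_def by blast
      qed
    qed
  qed
  have BA: "B \<subseteq> A" unfolding AB by blast
  have BA': "\<not> A \<subseteq> B" using aB AB by blast
  have Ca: "R_class A a = {a}"
    unfolding R_class_def R_equiv_def R_le_def
    using Pa Pb BA' AB by auto
  have Cb: "R_class A u = B" if "u \<in> B" for u
    unfolding R_class_def R_equiv_def R_le_def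
    using Pa Pb BA BA' AB that by auto
  have Bne: "a * a \<in> B" unfolding B_def by blast
  have cls: "R_classes A = {{a}, B}"
    unfolding R_classes_def AB using Ca Cb Bne AB by auto
  have neq: "{a} \<noteq> B" using aB by blast
  have refl: "R_class_le A X X" if "X \<in> {{a}, B}" for X
    unfolding R_class_le_def R_le_def using that Bne by blast
  have ba: "R_class_le A B {a}"
    unfolding R_class_le_def R_le_def using Bne Pa Pb BA by auto
  have ch: "R_chain A {{a}, B}"
    unfolding R_chain_def cls using refl ba by blast
  have le: "ecard C \<le> 2" if "R_chain A C" for C
  proof -
    have "C \<subseteq> {{a}, B}" using that cls unfolding R_chain_def by blast
    then have "finite C" "card C \<le> card {{a}, B}"
      by (auto intro: finite_subset card_mono)
    then show ?thesis unfolding ecard_def using neq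
      by (simp add: numeral_eq_enat)
  qed
  have e2: "ecard {{a}, B} = 2" unfolding ecard_def using neq by (simp add: numeral_eq_enat)
  have "R_height A = 2"
    unfolding R_height_def
  proof (rule antisym)
    show "Sup (ecard ` {C. R_chain A C}) \<le> 2" using le by (auto intro: Sup_least)
    show "2 \<le> Sup (ecard ` {C. R_chain A C})"
      using ch e2 by (metis (mono_tags) Sup_upper image_eqI mem_Collect_eq)
  qed
  moreover have "A - {a} = B" using AB aB by blast
  ultimately show ?thesis using cls B_def by simp
qed

end
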